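(* Let $G(V)$ be a network, $\varepsilon>0$, $S\subseteq V$, and $S=B_1\cup\dots\cup B_m$ a partition with $m\ge2$ such that (1) for all $i$ and all $x,y\in B_i$, $R_{\mathrm{eff}}(x,y)\le\varepsilon/48$; and (2) for all $i\ne j$, $x\in B_i$, $y\in B_j$, $R_{\mathrm{eff}}(x,y)\ge\varepsilon$. Then there is $I\subseteq\{1,\dots,m\}$ with $|I|\ge m/2$ such that $R_{\mathrm{eff}}(B_i,S\setminus B_i)\ge\varepsilon/24$ for all $i\in I$.
   Context: A network is a finite connected graph $G=(V,E)$ with symmetric conductances $c_{xy}\ge0$, $c_{xy}>0$ iff $xy\in E$; $R_{\mathrm{eff}}$ is effective resistance. For disjoint nonempty $S,T\subseteq V$, $R_{\mathrm{eff}}(S,T)$ is the effective resistance between the two vertices obtained by identifying (gluing) all vertices of $S$ into a single vertex and all vertices of $T$ into a single vertex, where the conductance between a glued vertex and another vertex $x$ is the sum of the conductances from $x$ to the glued set (and similarly between the two glued vertices); for $v\in V$, $R_{\mathrm{eff}}(v,S)=R_{\mathrm{eff}}(\{v\},S)$. *)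

theory Defs
  imports Complex_Main
begin

definition network :: "'a set \<Rightarrow> ('a \<Rightarrow> 'a \<Rightarrow> real) \<Rightarrow> bool" where
  "network V c \<longleftrightarrow> finite V \<and> V \<noteq> {} \<and>
     (\<forall>x y. 0 \<le> c x y) \<and> (\<forall>x y. c x y = c y x) \<and>
     (\<forall>x y. 0 < c x y \<longrightarrow> x \<in> V \<and> y \<in> V) \<and> (\<forall>x. c x x = 0) \<and>
     (\<forall>x\<in>V. \<forall>y\<in>V. (x, y) \<in> {(u, v). 0 < c u v}\<^sup>*)"

text \<open>Dirichlet energy of a function on the vertices (each edge counted once).\<close>
definition energy :: "'a set \<Rightarrow> ('a \<Rightarrow> 'a \<Rightarrow> real) \<Rightarrow> ('a \<Rightarrow> real) \<Rightarrow> real" where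
  "energy W C f = (\<Sum>u\<in>W. \<Sum>v\<in>W. C u v * (f u - f v)^2) / 2"

text \<open>Effective resistance between two vertices: reciprocal of the effective
conductance, i.e. the minimal energy of a unit potential (Dirichlet principle);
R_eff(a,a) = 0.\<close>
definition reff :: "'a set \<Rightarrow> ('a \<Rightarrow> 'a \<Rightarrow> real) \<Rightarrow> 'a \<Rightarrow> 'a \<Rightarrow> real" where
  "reff W C a b = (if a = b then 0 else
      1 / Inf {energy W C f | f. f a = 1 \<and> f b = 0})"

text \<open>Gluing S and T: the vertices of the glued network are S, T and the
singletons of the remaining vertices; the conductance between two distinct
glued vertices is the sum of conductances between their members.\<close>
definition glued_vertices :: "'a set \<Rightarrow> 'a set \<Rightarrow> 'a set \<Rightarrow> 'a set set" where
  "glued_vertices V S T = {S, T} \<union> {{x} | x. x \<in> V - (S \<union> T)}"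

definition glued_cond :: "('a \<Rightarrow> 'a \<Rightarrow> real) \<Rightarrow> 'a set \<Rightarrow> 'a set \<Rightarrow> real" where
  "glued_cond c P Q = (if P = Q then 0 else (\<Sum>x\<in>P. \<Sum>y\<in>Q. c x y))"

definition reff_set :: "'a set \<Rightarrow> ('a \<Rightarrow> 'a \<Rightarrow> real) \<Rightarrow> 'a set \<Rightarrow> 'a set \<Rightarrow> real" where
  "reff_set V c S T = reff (glued_vertices V S T) (glued_cond c) S T"

end

theory Submission
  imports Defs "HOL-Analysis.Analysis"
begin


definition lap :: "'a set \<Rightarrow> ('a \<Rightarrow> 'a \<Rightarrow> real) \<Rightarrow> ('a \<Rightarrow> real) \<Rightarrow> 'a \<Rightarrow> real" where
  "lap V c f z = (\<Sum>v\<in>V. c z v * (f z - f v))"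

definition eb :: "'a set \<Rightarrow> ('a \<Rightarrow> 'a \<Rightarrow> real) \<Rightarrow> ('a \<Rightarrow> real) \<Rightarrow> ('a \<Rightarrow> real) \<Rightarrow> real" where
  "eb V c f g = (\<Sum>u\<in>V. \<Sum>v\<in>V. c u v * (f u - f v) * (g u - g v)) / 2"

lemma energy_eb: "energy V c f = eb V c f f"
  unfolding energy_def eb_def by (simp add: power2_eq_square mult.assoc)

lemma eb_sym: "eb V c f g = eb V c g f"
  unfolding eb_def by (simp add: algebra_simps)

lemma eb_lap:
  assumes sym: "\<forall>x y. c x y = c y x"
  shows "eb V c f g = (\<Sum>u\<in>V. g u * lap V c f u)"
proof -
  have A: "(\<Sum>u\<in>V. \<Sum>v\<in>V. c u v * (f u - f v) * g v) = - (\<Sum>u\<in>V. \<Sum>v\<in>V. c u v * (f u - f v) * g u)"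
  proof -
    have "(\<Sum>u\<in>V. \<Sum>v\<in>V. c u v * (f u - f v) * g v) = (\<Sum>v\<in>V. \<Sum>u\<in>V. c u v * (f u - f v) * g v)"
      by (rule sum.swap)
    also have "\<dots> = (\<Sum>v\<in>V. \<Sum>u\<in>V. - (c v u * (f v - f u) * g v))"
      using sym by (intro sum.cong refl) (simp add: algebra_simps)
    also have "\<dots> = - (\<Sum>u\<in>V. \<Sum>v\<in>V. c u v * (f u - f v) * g u)"
      by (simp add: sum_negf)
    finally show ?thesis .
  qed
  have "(\<Sum>u\<in>V. \<Sum>v\<in>V. c u v * (f u - f v) * (g u - g v)) =
     (\<Sum>u\<in>V. \<Sum>v\<in>V. c u v * (f u - f v) * g u - c u v * (f u - f v) * g v)"
    by (intro sum.cong refl) (simp add: algebra_simps)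
  also have "\<dots> = (\<Sum>u\<in>V. \<Sum>v\<in>V. c u v * (f u - f v) * g u) - (\<Sum>u\<in>V. \<Sum>v\<in>V. c u v * (f u - f v) * g v)"
    by (simp add: sum_subtractf)
  also have "\<dots> = 2 * (\<Sum>u\<in>V. \<Sum>v\<in>V. c u v * (f u - f v) * g u)" using A by simp
  also have "\<dots> = 2 * (\<Sum>u\<in>V. g u * lap V c f u)"
    unfolding lap_def by (simp add: sum_distrib_left sum_distrib_right mult.commute mult.left_commute)
  finally show ?thesis unfolding eb_def by simp
qed

lemma lap_sum0:
  assumes sym: "\<forall>x y. c x y = c y x"
  shows "(\<Sum>u\<in>V. lap V c f u) = 0"
proof -
  have "eb V c f (\<lambda>_. 1) = 0" unfolding eb_def by simp
  with eb_lap[OF sym, of V f "\<lambda>_. 1"] show ?thesis by simp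
qed

lemma energy_expand:
  "energy V c (\<lambda>z. f z + t * h z) = energy V c f + 2 * t * eb V c f h + t^2 * energy V c h"
proof -
  have "(\<Sum>u\<in>V. \<Sum>v\<in>V. c u v * ((f u + t * h u) - (f v + t * h v))^2) =
     (\<Sum>u\<in>V. \<Sum>v\<in>V. c u v * (f u - f v)^2 + 2 * t * (c u v * (f u - f v) * (h u - h v)) + t^2 * (c u v * (h u - h v)^2))"
    by (intro sum.cong refl) (simp add: power2_eq_square algebra_simps)
  also have "\<dots> = (\<Sum>u\<in>V. \<Sum>v\<in>V. c u v * (f u - f v)^2) + 2 * t * (\<Sum>u\<in>V. \<Sum>v\<in>V. c u v * (f u - f v) * (h u - h v))
       + t^2 * (\<Sum>u\<in>V. \<Sum>v\<in>V. c u v * (h u - h v)^2)"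
    by (simp add: sum.distrib sum_distrib_left)
  finally show ?thesis unfolding energy_def eb_def by (simp add: algebra_simps add_divide_distrib)
qed

lemma energy_nonneg: "\<forall>x y. 0 \<le> c x y \<Longrightarrow> 0 \<le> energy V c f"
  unfolding energy_def by (intro divide_nonneg_pos sum_nonneg mult_nonneg_nonneg) auto

lemma eb_zero_of_min:
  assumes min: "\<And>t. energy V c u \<le> energy V c (\<lambda>z. u z + t * h z)"
    and nn: "\<forall>x y. 0 \<le> c x y"
  shows "eb V c u h = 0"
proof (rule ccontr)
  assume ne: "eb V c u h \<noteq> 0"
  define a where "a = eb V c u h"
  define b where "b = energy V c h"
  have b0: "b \<ge> 0" unfolding b_def using energy_nonneg[OF nn] .
  define t where "t = - a / (b + 1)"
  have le: "0 \<le> 2 * t * a + t^2 * b" using min[of t] unfolding energy_expand a_def b_def by simp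
  have b1: "b + 1 > 0" using b0 by simp
  have "(2 * t * a + t^2 * b) * (b+1)^2 = a^2 * (- b - 2)"
  proof -
    have tb: "t * (b+1) = - a" using b1 unfolding t_def by simp
    have "(2 * t * a + t^2 * b) * (b+1)^2 = 2 * a * (t * (b+1)) * (b+1) + (t*(b+1))^2 * b"
      by (simp add: power2_eq_square algebra_simps)
    also have "\<dots> = a^2 * (- b - 2)" unfolding tb by (simp add: power2_eq_square algebra_simps)
    finally show ?thesis .
  qed
  moreover have "a^2 * (- b - 2) < 0" using b0 ne unfolding a_def
    by (intro mult_pos_neg) auto
  moreover have "(2 * t * a + t^2 * b) * (b+1)^2 \<ge> 0" using le b1 by simp
  ultimately show False by simp
qed

lemma lap_scale: "lap V c (\<lambda>z. k * f z) z = k * lap V c f z"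
  unfolding lap_def by (simp add: sum_distrib_left algebra_simps)

lemma lap_diff: "lap V c (\<lambda>z. f z - g z) z = lap V c f z - lap V c g z"
  unfolding lap_def by (simp add: sum_subtractf[symmetric] algebra_simps)

lemma energy_cong: "(\<And>z. z \<in> V \<Longrightarrow> f z = g z) \<Longrightarrow> energy V c f = energy V c g"
  unfolding energy_def by (intro arg_cong[where f="\<lambda>x. x/2"] sum.cong refl) auto



lemma net_facts:
  assumes "network V c"
  shows "finite V" "\<forall>x y. 0 \<le> c x y" "\<forall>x y. c x y = c y x"
    "\<forall>x\<in>V. \<forall>y\<in>V. (x, y) \<in> {(u, v). 0 < c u v}\<^sup>*"
    "\<forall>x y. 0 < c x y \<longrightarrow> x \<in> V \<and> y \<in> V"
  using assms unfolding network_def by blast+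

lemma energy_zero_const:
  assumes net: "network V c" and E0: "energy V c f = 0" and x: "x \<in> V" and y: "y \<in> V"
  shows "f x = f y"
proof -
  note nf = net_facts[OF net]
  have edge: "f u = f v" if uv0: "0 < c u v" for u v
  proof -
    have uv: "u \<in> V" "v \<in> V" using nf(5) uv0 by auto
    have s0: "(\<Sum>u\<in>V. \<Sum>v\<in>V. c u v * (f u - f v)^2) = 0" using E0 unfolding energy_def by simp
    have nn: "\<And>u. u \<in> V \<Longrightarrow> 0 \<le> (\<Sum>v\<in>V. c u v * (f u - f v)^2)"
      using nf(2) by (intro sum_nonneg mult_nonneg_nonneg) auto
    have s1: "(\<Sum>v\<in>V. c u v * (f u - f v)^2) = 0"
      using iffD1[OF sum_nonneg_eq_0_iff[OF nf(1) nn] s0] uv(1) by (rule bspec)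
    have nn2: "\<And>v. v \<in> V \<Longrightarrow> 0 \<le> c u v * (f u - f v)^2"
      using nf(2) by (intro mult_nonneg_nonneg) auto
    have "c u v * (f u - f v)^2 = 0"
      using iffD1[OF sum_nonneg_eq_0_iff[OF nf(1) nn2] s1] uv(2) by (rule bspec)
    then show ?thesis using uv0 by simp
  qed
  have "(x, y) \<in> {(u, v). 0 < c u v}\<^sup>*" using nf(4) x y by blast
  then show ?thesis
  proof (induction rule: rtrancl_induct)
    case base then show ?case by simp
  next
    case (step y z) then show ?case using edge by auto
  qed
qed
lemma cpt_PiE: fixes S :: "'a \<Rightarrow> real set"
  assumes "\<And>i. compact (S i)" shows "compact (Pi\<^sub>E UNIV S)"
proof -
  have "compactin (product_topology (\<lambda>_. euclidean) UNIV) (Pi\<^sub>E UNIV S)"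
    using assms by (simp add: compactin_PiE)
  then show ?thesis by (simp add: euclidean_product_topology)
qed

lemma energy_cont: "continuous_on UNIV (\<lambda>f::'a\<Rightarrow>real. energy V c f)"
  unfolding energy_def by (intro continuous_intros continuous_on_product_coordinates) auto

definition clamp :: "real \<Rightarrow> real" where "clamp a = max 0 (min 1 a)"

lemma clamp_lip: "\<bar>clamp a - clamp b\<bar> \<le> \<bar>a - b\<bar>"
  unfolding clamp_def by auto

lemma energy_clamp:
  assumes "\<forall>x y. 0 \<le> c x y"
  shows "energy V c (\<lambda>z. clamp (f z)) \<le> energy V c f"
  unfolding energy_def
proof (intro divide_right_mono sum_mono mult_left_mono)
  fix u v
  have "\<bar>clamp (f u) - clamp (f v)\<bar>^2 \<le> \<bar>f u - f v\<bar>^2"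
    by (intro power_mono clamp_lip) auto
  then show "(clamp (f u) - clamp (f v))\<^sup>2 \<le> (f u - f v)\<^sup>2" by simp
qed (use assms in auto)

lemma minimizer_exists:
  assumes net: "network V c" and d: "\<forall>z\<in>D. 0 \<le> d z \<and> d z \<le> 1"
  shows "\<exists>u. (\<forall>z\<in>D. u z = d z) \<and> (\<forall>z. 0 \<le> u z \<and> u z \<le> 1) \<and>
           (\<forall>f. (\<forall>z\<in>D. f z = d z) \<longrightarrow> energy V c u \<le> energy V c f)"
proof -
  note nf = net_facts[OF net]
  define S where "S = (\<lambda>z. if z \<in> D then {d z} else {0..(1::real)})"
  define K where "K = Pi\<^sub>E UNIV S"
  have cK: "compact K" unfolding K_def by (rule cpt_PiE) (auto simp: S_def)
  have "(\<lambda>z. if z \<in> D then d z else 0) \<in> K" unfolding K_def S_def by auto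
  then have neK: "K \<noteq> {}" by blast
  obtain u where uK: "u \<in> K" and umin: "\<forall>y\<in>K. energy V c u \<le> energy V c y"
    using continuous_attains_inf[OF cK neK continuous_on_subset[OF energy_cont]] by blast
  have u1: "\<forall>z\<in>D. u z = d z" and u2: "\<forall>z. 0 \<le> u z \<and> u z \<le> 1"
  proof -
    have "u z \<in> S z" for z using uK unfolding K_def by auto
    then have A: "u z \<in> (if z \<in> D then {d z} else {0..1})" for z unfolding S_def by blast
    show "\<forall>z\<in>D. u z = d z"
    proof
      fix z assume "z \<in> D" then show "u z = d z" using A[of z] by simp
    qed
    show "\<forall>z. 0 \<le> u z \<and> u z \<le> 1"
    proof
      fix z show "0 \<le> u z \<and> u z \<le> 1" using A[of z] d by (cases "z \<in> D") auto
    qed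
  qed
  have "energy V c u \<le> energy V c f" if "\<forall>z\<in>D. f z = d z" for f
  proof -
    have "(\<lambda>z. clamp (f z)) \<in> K"
      using that d unfolding K_def S_def clamp_def by auto
    then have "energy V c u \<le> energy V c (\<lambda>z. clamp (f z))" using umin by blast
    also have "\<dots> \<le> energy V c f" by (rule energy_clamp[OF nf(2)])
    finally show ?thesis .
  qed
  with u1 u2 show ?thesis by blast
qed

lemma min_harmonic:
  assumes net: "network V c"
    and umin: "\<forall>f. (\<forall>z\<in>D. f z = u z) \<longrightarrow> energy V c u \<le> energy V c f"
    and z: "z \<in> V" "z \<notin> D"
  shows "lap V c u z = 0"
proof -
  note nf = net_facts[OF net]
  define h where "h = (\<lambda>y. if y = z then 1 else (0::real))"
  have "eb V c u h = 0"
  proof (rule eb_zero_of_min[OF _ nf(2)])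
    fix t
    have "\<forall>y\<in>D. u y + t * h y = u y" using z unfolding h_def by auto
    moreover have "(\<forall>y\<in>D. u y + t * h y = u y) \<longrightarrow> energy V c u \<le> energy V c (\<lambda>y. u y + t * h y)"
      using spec[OF umin, of "\<lambda>y. u y + t * h y"] by simp
    ultimately show "energy V c u \<le> energy V c (\<lambda>y. u y + t * h y)" by blast
  qed
  moreover have "eb V c u h = (\<Sum>y\<in>V. h y * lap V c u y)" by (rule eb_lap[OF nf(3)])
  moreover have "(\<Sum>y\<in>V. h y * lap V c u y) = lap V c u z"
  proof -
    have "(\<Sum>y\<in>V. h y * lap V c u y) = (\<Sum>y\<in>V. if y = z then lap V c u y else 0)"
      by (intro sum.cong) (auto simp: h_def)
    then show ?thesis using z nf(1) by simp
  qed
  ultimately show ?thesis by simp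
qed



lemma eb_delta:
  assumes net: "network V c" and p: "p \<in> V" and q: "q \<in> V"
    and L: "\<forall>z\<in>V. lap V c f z = k * ((if z = p then 1 else 0) - (if z = q then 1 else 0))"
  shows "eb V c f g = k * (g p - g q)"
proof -
  note nf = net_facts[OF net]
  have "eb V c f g = (\<Sum>u\<in>V. g u * lap V c f u)" by (rule eb_lap[OF nf(3)])
  also have "\<dots> = (\<Sum>u\<in>V. (if u = p then k * g u else 0) - (if u = q then k * g u else 0))"
  proof (intro sum.cong refl)
    fix u assume u: "u \<in> V"
    show "g u * lap V c f u = (if u = p then k * g u else 0) - (if u = q then k * g u else 0)"
      unfolding L[rule_format, OF u] by (simp add: algebra_simps)
  qed
  also have "\<dots> = k * g p - k * g q" using p q nf(1) by (simp add: sum_subtractf)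
  finally show ?thesis by (simp add: algebra_simps)
qed

lemma pair_pot:
  assumes net: "network V c" and a: "a \<in> V" and b: "b \<in> V" and ab: "a \<noteq> b"
  shows "\<exists>\<phi>. \<phi> a = 1 \<and> \<phi> b = 0 \<and> (\<forall>z. 0 \<le> \<phi> z \<and> \<phi> z \<le> 1) \<and> energy V c \<phi> > 0 \<and>
     reff V c a b = 1 / energy V c \<phi> \<and>
     (\<forall>f. f a = 1 \<and> f b = 0 \<longrightarrow> energy V c \<phi> \<le> energy V c f) \<and>
     (\<forall>z\<in>V. lap V c \<phi> z = energy V c \<phi> * ((if z = a then 1 else 0) - (if z = b then 1 else 0)))"
proof -
  note nf = net_facts[OF net]
  define d where "d = (\<lambda>z. if z = a then 1 else (0::real))"
  have dd: "\<forall>z\<in>{a,b}. 0 \<le> d z \<and> d z \<le> 1" unfolding d_def by auto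
  obtain \<phi> where p1: "\<forall>z\<in>{a,b}. \<phi> z = d z" and p2: "\<forall>z. 0 \<le> \<phi> z \<and> \<phi> z \<le> 1"
    and p3: "\<forall>f. (\<forall>z\<in>{a,b}. f z = d z) \<longrightarrow> energy V c \<phi> \<le> energy V c f"
    using minimizer_exists[OF net dd] by blast
  have pa: "\<phi> a = 1" and pb: "\<phi> b = 0" using p1 ab unfolding d_def by auto
  have pmin: "\<forall>f. f a = 1 \<and> f b = 0 \<longrightarrow> energy V c \<phi> \<le> energy V c f"
    using p3 ab unfolding d_def by auto
  have pmin': "\<forall>f. (\<forall>z\<in>{a,b}. f z = \<phi> z) \<longrightarrow> energy V c \<phi> \<le> energy V c f"
    using p3 p1 by auto
  define X where "X = {energy V c f | f. f a = 1 \<and> f b = 0}"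
  have "Inf X = energy V c \<phi>"
    unfolding X_def by (rule cInf_eq_minimum) (use pa pb pmin in auto)
  then have reff: "reff V c a b = 1 / energy V c \<phi>" unfolding reff_def X_def using ab by simp
  have Epos: "energy V c \<phi> > 0"
  proof -
    have "energy V c \<phi> \<ge> 0" by (rule energy_nonneg[OF nf(2)])
    moreover have "energy V c \<phi> \<noteq> 0"
    proof
      assume "energy V c \<phi> = 0"
      then have "\<phi> a = \<phi> b" by (rule energy_zero_const[OF net _ a b])
      with pa pb show False by simp
    qed
    ultimately show ?thesis by simp
  qed
  define La where "La = lap V c \<phi> a"
  define Lb where "Lb = lap V c \<phi> b"
  have harm: "lap V c \<phi> z = 0" if "z \<in> V" "z \<notin> {a,b}" for z
    by (rule min_harmonic[OF net pmin' that])
  have Lz: "lap V c \<phi> z = (if z = a then La else 0) + (if z = b then Lb else 0)" if "z \<in> V" for z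
    using harm[OF that] ab unfolding La_def Lb_def by auto
  have "(\<Sum>z\<in>V. lap V c \<phi> z) = 0" by (rule lap_sum0[OF nf(3)])
  also have "(\<Sum>z\<in>V. lap V c \<phi> z) = (\<Sum>z\<in>V. (if z = a then La else 0) + (if z = b then Lb else 0))"
    using Lz by (intro sum.cong) auto
  also have "\<dots> = La + Lb" using a b nf(1) by (simp add: sum.distrib)
  finally have LaLb: "Lb = - La" by simp
  have "energy V c \<phi> = (\<Sum>z\<in>V. \<phi> z * lap V c \<phi> z)"
    using energy_eb eb_lap[OF nf(3)] by metis
  also have "\<dots> = (\<Sum>z\<in>V. (if z = a then La else 0))"
    using Lz pa pb ab by (intro sum.cong) auto
  also have "\<dots> = La" using a nf(1) by simp
  finally have ELa: "energy V c \<phi> = La" .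
  have "\<forall>z\<in>V. lap V c \<phi> z = energy V c \<phi> * ((if z = a then 1 else 0) - (if z = b then 1 else 0))"
    using Lz LaLb ELa ab by auto
  with pa pb p2 Epos reff pmin show ?thesis by blast
qed

lemma cur_pot:
  assumes net: "network V c" and a: "a \<in> V" and b: "b \<in> V"
  shows "\<exists>\<Psi>. \<forall>z\<in>V. lap V c \<Psi> z = 1 * ((if z = a then 1 else 0) - (if z = b then 1 else 0))"
proof (cases "a = b")
  case True
  then show ?thesis by (intro exI[of _ "\<lambda>_. 0"]) (simp add: lap_def)
next
  case False
  obtain \<phi> where E: "energy V c \<phi> > 0"
    and L: "\<forall>z\<in>V. lap V c \<phi> z = energy V c \<phi> * ((if z = a then 1 else 0) - (if z = b then 1 else 0))"
    using pair_pot[OF net a b False] by blast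
  show ?thesis
  proof (intro exI[of _ "\<lambda>z. (1 / energy V c \<phi>) * \<phi> z"] ballI)
    fix y assume y: "y \<in> V"
    have "lap V c (\<lambda>z. (1 / energy V c \<phi>) * \<phi> z) y = (1 / energy V c \<phi>) * lap V c \<phi> y"
      by (rule lap_scale)
    also have "\<dots> = 1 * ((if y = a then 1 else 0) - (if y = b then 1 else 0))"
      using L y E by simp
    finally show "lap V c (\<lambda>z. (1 / energy V c \<phi>) * \<phi> z) y = 1 * ((if y = a then 1 else 0) - (if y = b then 1 else 0))" .
  qed
qed

lemma transfer:
  assumes net: "network V c" and p: "p \<in> V" and q: "q \<in> V"
    and L: "\<forall>z\<in>V. lap V c \<Psi> z = 1 * ((if z = p then 1 else 0) - (if z = q then 1 else 0))"
    and z: "z \<in> V" and w: "w \<in> V"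
  shows "\<bar>\<Psi> z - \<Psi> w\<bar> \<le> reff V c z w"
proof (cases "z = w")
  case True then show ?thesis by (simp add: reff_def)
next
  case False
  obtain \<phi> where p2: "\<forall>y. 0 \<le> \<phi> y \<and> \<phi> y \<le> 1" and E: "energy V c \<phi> > 0"
    and R: "reff V c z w = 1 / energy V c \<phi>"
    and Lp: "\<forall>y\<in>V. lap V c \<phi> y = energy V c \<phi> * ((if y = z then 1 else 0) - (if y = w then 1 else 0))"
    using pair_pot[OF net z w False] by blast
  have e1: "eb V c \<Psi> \<phi> = 1 * (\<phi> p - \<phi> q)" by (rule eb_delta[OF net p q L])
  have e2: "eb V c \<phi> \<Psi> = energy V c \<phi> * (\<Psi> z - \<Psi> w)" by (rule eb_delta[OF net z w Lp])
  have "\<bar>\<phi> p - \<phi> q\<bar> \<le> 1" using p2[rule_format, of p] p2[rule_format, of q] by auto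
  then have "energy V c \<phi> * \<bar>\<Psi> z - \<Psi> w\<bar> \<le> 1"
    using e1 e2 eb_sym[of V c \<Psi> \<phi>] E by (simp add: abs_mult)
  then have "\<bar>\<Psi> z - \<Psi> w\<bar> \<le> 1 / energy V c \<phi>" using E by (simp add: field_simps mult.commute)
  then show ?thesis using R by simp
qed

lemma reff_le:
  assumes net: "network V c" and a: "a \<in> V" and b: "b \<in> V" and ab: "a \<noteq> b"
    and L: "\<forall>z\<in>V. lap V c f z = 1 * ((if z = a then 1 else 0) - (if z = b then 1 else 0))"
  shows "reff V c a b \<le> f a - f b"
proof -
  note nf = net_facts[OF net]
  define P where "P = f a - f b"
  have EP: "energy V c f = P" unfolding P_def energy_eb using eb_delta[OF net a b L, of f] by simp
  have Ppos: "P > 0"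
  proof -
    have "P \<ge> 0" using energy_nonneg[OF nf(2), of V f] unfolding EP .
    moreover have "P \<noteq> 0"
    proof
      assume "P = 0"
      then have "energy V c f = 0" using EP by simp
      then have c: "\<forall>v\<in>V. f a = f v" using energy_zero_const[OF net _ a] by blast
      have "lap V c f a = (\<Sum>v\<in>V. 0)" unfolding lap_def
      proof (rule sum.cong[OF refl])
        fix v assume "v \<in> V"
        then have "f a = f v" using c by blast
        then show "c a v * (f a - f v) = 0" by simp
      qed
      then have "lap V c f a = 0" by simp
      with L a ab show False by simp
    qed
    ultimately show ?thesis by simp
  qed
  define X where "X = {energy V c g | g. g a = 1 \<and> g b = 0}"
  have lb: "1 / P \<le> y" if "y \<in> X" for y
  proof -
    from that obtain g where g: "g a = 1" "g b = 0" and y: "y = energy V c g" unfolding X_def by auto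
    have "eb V c g f = 1" using eb_delta[OF net a b L, of g] eb_sym[of V c g f] g by simp
    have "0 \<le> energy V c (\<lambda>z. g z + (- 1 / P) * f z)" by (rule energy_nonneg[OF nf(2)])
    also have "\<dots> = energy V c g + 2 * (- 1 / P) * eb V c g f + (- 1 / P)^2 * energy V c f"
      by (rule energy_expand)
    also have "\<dots> = energy V c g - 1 / P"
      using \<open>eb V c g f = 1\<close> EP Ppos by (simp add: power2_eq_square field_simps)
    finally show ?thesis using y by simp
  qed
  have ne: "X \<noteq> {}"
  proof -
    have "energy V c (\<lambda>z. if z = a then 1 else 0) \<in> {energy V c g | g. g a = 1 \<and> g b = 0}"
      using ab by (intro CollectI exI[of _ "\<lambda>z. if z = a then 1 else 0"]) simp
    then show ?thesis unfolding X_def by (metis empty_iff)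
  qed
  have "1 / P \<le> Inf X" by (rule cInf_greatest[OF ne lb])
  then have "1 / Inf X \<le> P"
  proof -
    assume h: "1 / P \<le> Inf X"
    have ip: "Inf X > 0" using h Ppos by (meson less_le_trans zero_less_divide_1_iff)
    have "1 / Inf X \<le> 1 / (1 / P)" using h Ppos ip by (intro divide_left_mono) (auto intro: mult_pos_pos)
    then show ?thesis by simp
  qed
  then show ?thesis unfolding reff_def X_def P_def using ab by simp
qed

lemma harm_measure:
  assumes net: "network V c"
  shows "\<exists>u. (\<forall>z\<in>S. u z = (if z \<in> B then 1 else 0)) \<and> (\<forall>z. 0 \<le> u z \<and> u z \<le> 1) \<and>
     (\<forall>f. (\<forall>z\<in>S. f z = (if z \<in> B then 1 else 0)) \<longrightarrow> energy V c u \<le> energy V c f) \<and>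
     (\<forall>z\<in>V - S. lap V c u z = 0)"
proof -
  obtain u where u1: "\<forall>z\<in>S. u z = (if z \<in> B then 1 else 0)" and u2: "\<forall>z. 0 \<le> u z \<and> u z \<le> 1"
    and u3: "\<forall>f. (\<forall>z\<in>S. f z = (if z \<in> B then 1 else 0)) \<longrightarrow> energy V c u \<le> energy V c f"
    using minimizer_exists[OF net, of S "\<lambda>z. if z \<in> B then 1 else 0"] by fastforce
  have u3': "\<forall>f. (\<forall>z\<in>S. f z = u z) \<longrightarrow> energy V c u \<le> energy V c f" using u1 u3 by auto
  have "\<forall>z\<in>V - S. lap V c u z = 0" using min_harmonic[OF net u3'] by blast
  with u1 u2 u3 show ?thesis by blast
qed



lemma glued_reff:
  assumes net: "network V c" and SV: "S \<subseteq> V" and BS: "B \<subseteq> S" and Bne: "B \<noteq> {}"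
    and Tne: "S - B \<noteq> {}"
    and u1: "\<forall>z\<in>S. u z = (if z \<in> B then 1 else 0)"
    and umin: "\<forall>f. (\<forall>z\<in>S. f z = (if z \<in> B then 1 else 0)) \<longrightarrow> energy V c u \<le> energy V c f"
  shows "reff_set V c B (S - B) = 1 / energy V c u"
proof -
  note nf = net_facts[OF net]
  define T where "T = S - B"
  define W where "W = glued_vertices V B T"
  have BT: "B \<union> T = S" using BS unfolding T_def by auto
  have Wdef: "W = {B, T} \<union> (\<lambda>x. {x}) ` (V - S)"
    unfolding W_def glued_vertices_def BT by auto
  have BneT: "B \<noteq> T" using Bne unfolding T_def by auto
  have finW: "finite W" unfolding Wdef using nf(1) by auto
  have WsubV: "\<forall>A\<in>W. A \<subseteq> V" unfolding Wdef T_def using BS SV by auto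
  have finA: "\<forall>A\<in>W. finite A" using WsubV nf(1) finite_subset by blast
  have disj: "\<forall>A\<in>W. \<forall>A'\<in>W. A \<noteq> A' \<longrightarrow> A \<inter> A' = {}"
    unfolding Wdef T_def using BS by auto
  have UW: "\<Union>W = V" unfolding Wdef T_def using BS SV by auto
  have decomp: "(\<Sum>z\<in>V. h z) = (\<Sum>A\<in>W. \<Sum>z\<in>A. h z)" for h :: "'a \<Rightarrow> real"
  proof -
    have "(\<Sum>z\<in>V. h z) = sum h (\<Union>W)" using UW by simp
    also have "\<dots> = (sum \<circ> sum) h W" by (rule sum.Union_disjoint[OF finA disj])
    finally show ?thesis by simp
  qed
  define F where "F g = (\<lambda>z. if z \<in> B then g B else if z \<in> T then g T else g {z})" for g :: "'a set \<Rightarrow> real"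
  have mem: "F g z = g A" if "A \<in> W" "z \<in> A" for g A z
    using that BneT BS unfolding Wdef F_def T_def by auto
  have key: "energy W (glued_cond c) g = energy V c (F g)" for g
  proof -
    have "(\<Sum>u\<in>V. \<Sum>v\<in>V. c u v * (F g u - F g v)^2)
        = (\<Sum>A\<in>W. \<Sum>u\<in>A. \<Sum>A'\<in>W. \<Sum>v\<in>A'. c u v * (F g u - F g v)^2)"
      by (simp add: decomp)
    also have "\<dots> = (\<Sum>A\<in>W. \<Sum>u\<in>A. \<Sum>A'\<in>W. \<Sum>v\<in>A'. c u v * (g A - g A')^2)"
      by (intro sum.cong refl) (simp add: mem)
    also have "\<dots> = (\<Sum>A\<in>W. \<Sum>A'\<in>W. \<Sum>u\<in>A. \<Sum>v\<in>A'. c u v * (g A - g A')^2)"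
      by (intro sum.cong refl sum.swap)
    also have "\<dots> = (\<Sum>A\<in>W. \<Sum>A'\<in>W. glued_cond c A A' * (g A - g A')^2)"
      unfolding glued_cond_def by (intro sum.cong refl) (simp add: sum_distrib_right)
    finally show ?thesis unfolding energy_def by simp
  qed
  define X where "X = {energy W (glued_cond c) g | g. g B = 1 \<and> g T = 0}"
  have lower: "energy V c u \<le> y" if "y \<in> X" for y
  proof -
    from that obtain g where g: "g B = 1" "g T = 0" and y: "y = energy W (glued_cond c) g"
      unfolding X_def by auto
    have "\<forall>z\<in>S. F g z = (if z \<in> B then 1 else 0)"
      using g unfolding F_def T_def by auto
    then have "energy V c u \<le> energy V c (F g)" using umin by blast
    then show ?thesis using y key by simp
  qed
  define g0 where "g0 A = u (SOME x. x \<in> A)" for A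
  have sB: "(SOME x. x \<in> B) \<in> B" using Bne by (simp add: some_in_eq)
  have sT: "(SOME x. x \<in> T) \<in> T" using Tne unfolding T_def[symmetric] by (simp add: some_in_eq)
  have g0B: "g0 B = 1" unfolding g0_def using sB u1 BS by auto
  have g0T: "g0 T = 0" unfolding g0_def using sT u1 unfolding T_def by auto
  have "F g0 z = u z" if zV: "z \<in> V" for z
  proof -
    consider "z \<in> B" | "z \<in> T" | "z \<in> V - S" using zV BT by auto
    then show ?thesis
    proof cases
      case 1 then show ?thesis using g0B u1 BS unfolding F_def by auto
    next
      case 2 then show ?thesis using g0T u1 BneT unfolding F_def T_def by auto
    next
      case 3 then show ?thesis using BT unfolding F_def g0_def by auto
    qed
  qed
  then have "energy V c (F g0) = energy V c u" by (rule energy_cong)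
  then have e0: "energy W (glued_cond c) g0 = energy V c u" using key[of g0] by simp
  have inX: "energy V c u \<in> X" unfolding X_def
    by (intro CollectI exI[of _ g0]) (use e0 g0B g0T in simp)
  have "Inf X = energy V c u" by (rule cInf_eq_minimum[OF inX lower])
  then show ?thesis
    unfolding reff_set_def reff_def T_def[symmetric] W_def[symmetric] X_def[symmetric] using BneT by simp
qed



theorem mainTheorem13:
  fixes V :: "'a set" and c :: "'a \<Rightarrow> 'a \<Rightarrow> real" and \<epsilon> :: real
    and S :: "'a set" and B :: "nat \<Rightarrow> 'a set" and m :: nat
  assumes "network V c"
    and "\<epsilon> > 0"
    and "S \<subseteq> V"
    and "m \<ge> 2"
    and "\<forall>i\<in>{1..m}. B i \<noteq> {}"
    and "\<forall>i\<in>{1..m}. \<forall>j\<in>{1..m}. i \<noteq> j \<longrightarrow> B i \<inter> B j = {}"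
    and "(\<Union>i\<in>{1..m}. B i) = S"
    and "\<forall>i\<in>{1..m}. \<forall>x\<in>B i. \<forall>y\<in>B i. reff V c x y \<le> \<epsilon> / 48"
    and "\<forall>i\<in>{1..m}. \<forall>j\<in>{1..m}. i \<noteq> j \<longrightarrow>
           (\<forall>x\<in>B i. \<forall>y\<in>B j. reff V c x y \<ge> \<epsilon>)"
  shows "\<exists>I \<subseteq> {1..m}. real (card I) \<ge> real m / 2 \<and>
           (\<forall>i\<in>I. reff_set V c (B i) (S - B i) \<ge> \<epsilon> / 24)"
proof -
  note net = assms(1) and eps = assms(2) and SV = assms(3) and m2 = assms(4)
    and Bne = assms(5) and Bdisj = assms(6) and BU = assms(7) and Rin = assms(8) and Rout = assms(9)
  note nf = net_facts[OF net]
  define K where "K = {1..m}"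
  have finK: "finite K" unfolding K_def by simp
  have cardK: "card K = m" unfolding K_def by simp
  have oneK: "1 \<in> K" using m2 unfolding K_def by simp
  define x where "x i = (SOME z. z \<in> B i)" for i
  have xB: "x i \<in> B i" if "i \<in> K" for i
    using Bne that unfolding x_def K_def by (simp add: some_in_eq)
  have BS: "B i \<subseteq> S" if "i \<in> K" for i using BU that unfolding K_def by blast
  have xV: "x i \<in> V" if "i \<in> K" for i using xB[OF that] BS[OF that] SV by blast
  have finB: "finite (B i)" if "i \<in> K" for i by (rule finite_subset[OF subset_trans[OF BS[OF that] SV] nf(1)])
  have inB: "z \<in> B i \<longleftrightarrow> k = i" if "i \<in> K" "k \<in> K" "z \<in> B k" for i k z
  proof (cases "k = i")
    case False
    then have "B i \<inter> B k = {}" using Bdisj that(1,2) unfolding K_def by blast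
    then show ?thesis using that(3) False by blast
  qed (use that in simp)
  have xdist: "x i \<noteq> x k" if "i \<in> K" "k \<in> K" "i \<noteq> k" for i k
    using inB[OF that(1,2) xB[OF that(2)]] that(3) xB[OF that(1)] by auto
  have Ssplit: "(\<Sum>z\<in>S. h z) = (\<Sum>k\<in>K. \<Sum>z\<in>B k. h z)" for h :: "'a \<Rightarrow> real"
  proof -
    have "S = \<Union>(B ` K)" using BU unfolding K_def by simp
    then have "(\<Sum>z\<in>S. h z) = sum h (\<Union>(B ` K))" by simp
    also have "\<dots> = (\<Sum>k\<in>K. sum h (B k))"
      by (rule sum.UNION_disjoint) (use finK finB Bdisj in \<open>auto simp: K_def\<close>)
    finally show ?thesis .
  qed
  have VS: "(\<Sum>z\<in>V. h z) = (\<Sum>z\<in>S. h z)" if "\<forall>z\<in>V - S. h z = 0" for h :: "'a \<Rightarrow> real"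
    by (rule sum.mono_neutral_right[OF nf(1) SV]) (use that in auto)
  have "\<forall>i. \<exists>u. (\<forall>z\<in>S. u z = (if z \<in> B i then 1 else 0)) \<and> (\<forall>z. 0 \<le> u z \<and> u z \<le> 1) \<and>
     (\<forall>f. (\<forall>z\<in>S. f z = (if z \<in> B i then 1 else 0)) \<longrightarrow> energy V c u \<le> energy V c f) \<and>
     (\<forall>z\<in>V - S. lap V c u z = 0)"
    using harm_measure[OF net] by blast
  from choice[OF this] obtain U where U: "\<forall>i. (\<forall>z\<in>S. U i z = (if z \<in> B i then 1 else 0)) \<and> (\<forall>z. 0 \<le> U i z \<and> U i z \<le> 1) \<and>
     (\<forall>f. (\<forall>z\<in>S. f z = (if z \<in> B i then 1 else 0)) \<longrightarrow> energy V c (U i) \<le> energy V c f) \<and>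
     (\<forall>z\<in>V - S. lap V c (U i) z = 0)" by blast
  have U1: "\<And>i z. z \<in> S \<Longrightarrow> U i z = (if z \<in> B i then 1 else 0)" using U by blast
  have U2: "\<And>i z. 0 \<le> U i z \<and> U i z \<le> 1" using U by blast
  have U3: "\<And>i. \<forall>f. (\<forall>z\<in>S. f z = (if z \<in> B i then 1 else 0)) \<longrightarrow> energy V c (U i) \<le> energy V c f"
    using U by blast
  have U4: "\<And>i z. z \<in> V - S \<Longrightarrow> lap V c (U i) z = 0" using U by blast
  have "\<forall>b. \<exists>\<Psi>. b \<in> K \<longrightarrow> (\<forall>z\<in>V. lap V c \<Psi> z = 1 * ((if z = x b then 1 else 0) - (if z = x 1 then 1 else 0)))"
    using cur_pot[OF net] xV oneK by blast
  from choice[OF this] obtain Ps where Ps: "\<And>b z. b \<in> K \<Longrightarrow> z \<in> V \<Longrightarrow>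
      lap V c (Ps b) z = 1 * ((if z = x b then 1 else 0) - (if z = x 1 then 1 else 0))" by blast
  define J where "J i z = lap V c (U i) z" for i z
  define C where "C i = energy V c (U i)" for i
  define F where "F i k = (\<Sum>z\<in>B k. J i z)" for i k
  have Cnn: "C i \<ge> 0" for i unfolding C_def by (rule energy_nonneg[OF nf(2)])
  have E1: "eb V c (U i) g = (\<Sum>k\<in>K. \<Sum>z\<in>B k. g z * J i z)" for i g
  proof -
    have "eb V c (U i) g = (\<Sum>z\<in>V. g z * J i z)" unfolding J_def by (rule eb_lap[OF nf(3)])
    also have "\<dots> = (\<Sum>z\<in>S. g z * J i z)" by (rule VS) (simp add: J_def U4)
    also have "\<dots> = (\<Sum>k\<in>K. \<Sum>z\<in>B k. g z * J i z)" by (rule Ssplit)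
    finally show ?thesis .
  qed
  have E2: "(\<Sum>k\<in>K. F i k) = 0" for i
  proof -
    have "0 = (\<Sum>z\<in>V. J i z)" unfolding J_def by (rule lap_sum0[OF nf(3), symmetric])
    also have "\<dots> = (\<Sum>z\<in>S. J i z)" by (rule VS) (simp add: J_def U4)
    also have "\<dots> = (\<Sum>k\<in>K. F i k)" unfolding F_def by (rule Ssplit)
    finally show ?thesis by simp
  qed
  have E3: "F i k = eb V c (U i) (U k)" if "k \<in> K" for i k
  proof -
    have "eb V c (U i) (U k) = (\<Sum>k'\<in>K. \<Sum>z\<in>B k'. U k z * J i z)" by (rule E1)
    also have "\<dots> = (\<Sum>k'\<in>K. if k' = k then F i k' else 0)"
    proof (rule sum.cong[OF refl])
      fix k' assume k': "k' \<in> K"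
      have "(\<Sum>z\<in>B k'. U k z * J i z) = (\<Sum>z\<in>B k'. (if k' = k then J i z else 0))"
      proof (rule sum.cong[OF refl])
        fix z assume z: "z \<in> B k'"
        have "U k z = (if z \<in> B k then 1 else 0)" using U1 z BS[OF k'] by blast
        also have "(z \<in> B k) = (k' = k)" by (rule inB[OF that k' z])
        finally show "U k z * J i z = (if k' = k then J i z else 0)" by simp
      qed
      then show "(\<Sum>z\<in>B k'. U k z * J i z) = (if k' = k then F i k' else 0)"
        unfolding F_def by simp
    qed
    also have "\<dots> = F i k" using that finK by simp
    finally show ?thesis by simp
  qed
  have E4: "C i = F i i" if "i \<in> K" for i
    unfolding C_def energy_eb E3[OF that] ..
  have Fsym: "F i k = F k i" if "i \<in> K" "k \<in> K" for i k
    using E3[OF that(2), of i] E3[OF that(1), of k] eb_sym by metis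
  have Jpos: "J i z \<ge> 0" if "i \<in> K" "z \<in> B i" for i z
  proof -
    have "U i z = 1" using U1[of z i] that BS by auto
    then show ?thesis unfolding J_def lap_def using U2 nf(2)
      by (intro sum_nonneg mult_nonneg_nonneg) auto
  qed
  have Jneg: "J i z \<le> 0" if "i \<in> K" "k \<in> K" "k \<noteq> i" "z \<in> B k" for i k z
  proof -
    have "z \<notin> B i" using inB[OF that(1,2,4)] that(3) by simp
    then have "U i z = 0" using U1[of z i] that BS by auto
    then show ?thesis unfolding J_def lap_def using U2 nf(2)
      by (intro sum_nonpos mult_nonneg_nonpos) auto
  qed
  have Fneg: "F i k \<le> 0" if "i \<in> K" "k \<in> K" "k \<noteq> i" for i k
    unfolding F_def using Jneg[OF that] by (intro sum_nonpos) auto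
  have Abs: "(\<Sum>k\<in>K. \<Sum>z\<in>B k. \<bar>J i z\<bar>) = 2 * C i" if iK: "i \<in> K" for i
  proof -
    have "(\<Sum>k\<in>K. \<Sum>z\<in>B k. \<bar>J i z\<bar>) = (\<Sum>k\<in>K. - F i k + (if k = i then 2 * F i i else 0))"
    proof (rule sum.cong[OF refl])
      fix k assume k: "k \<in> K"
      show "(\<Sum>z\<in>B k. \<bar>J i z\<bar>) = - F i k + (if k = i then 2 * F i i else 0)"
      proof (cases "k = i")
        case True
        have "(\<Sum>z\<in>B k. \<bar>J i z\<bar>) = (\<Sum>z\<in>B k. J i z)"
          using Jpos[OF iK] True by (intro sum.cong) auto
        then show ?thesis using True unfolding F_def by simp
      next
        case False
        have "(\<Sum>z\<in>B k. \<bar>J i z\<bar>) = (\<Sum>z\<in>B k. - J i z)"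
          using Jneg[OF iK k False] by (intro sum.cong) auto
        then show ?thesis using False unfolding F_def by (simp add: sum_negf)
      qed
    qed
    also have "\<dots> = - (\<Sum>k\<in>K. F i k) + 2 * F i i"
      using finK iK by (simp add: sum_subtractf)
    also have "\<dots> = 2 * C i" using E2 E4[OF iK] by simp
    finally show ?thesis .
  qed
  have P1: "eb V c (U i) (Ps b) = (if b = i then 1 else 0) - (if i = 1 then 1 else 0)"
    if "i \<in> K" "b \<in> K" for i b
  proof -
    have L: "\<forall>z\<in>V. lap V c (Ps b) z = 1 * ((if z = x b then 1 else 0) - (if z = x 1 then 1 else 0))"
      using Ps[OF that(2)] by blast
    have "eb V c (Ps b) (U i) = 1 * (U i (x b) - U i (x 1))"
      by (rule eb_delta[OF net xV[OF that(2)] xV[OF oneK] L])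
    moreover have "U i (x b) = (if b = i then 1 else 0)"
      using U1[of "x b" i] xB[OF that(2)] BS[OF that(2)] inB[OF that(1) that(2) xB[OF that(2)]] by auto
    moreover have "U i (x 1) = (if i = 1 then 1 else 0)"
      using U1[of "x 1" i] xB[OF oneK] BS[OF oneK] inB[OF that(1) oneK xB[OF oneK]] by auto
    ultimately show ?thesis using eb_sym[of V c "U i" "Ps b"] by simp
  qed
  have P2: "\<bar>eb V c (U i) (Ps b) - (\<Sum>k\<in>K. F i k * Ps b (x k))\<bar> \<le> \<epsilon> / 48 * (2 * C i)"
    if iK: "i \<in> K" and bK: "b \<in> K" for i b
  proof -
    have L: "\<forall>z\<in>V. lap V c (Ps b) z = 1 * ((if z = x b then 1 else 0) - (if z = x 1 then 1 else 0))"
      using Ps[OF bK] by blast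
    have tr: "\<bar>Ps b z - Ps b (x k)\<bar> \<le> \<epsilon> / 48" if k: "k \<in> K" and z: "z \<in> B k" for k z
    proof -
      have "\<bar>Ps b z - Ps b (x k)\<bar> \<le> reff V c z (x k)"
        by (rule transfer[OF net xV[OF bK] xV[OF oneK] L]) (use z k BS SV xV in auto)
      also have "\<dots> \<le> \<epsilon> / 48" using Rin k z xB[OF k] unfolding K_def by blast
      finally show ?thesis .
    qed
    have fe: "(\<Sum>k\<in>K. F i k * Ps b (x k)) = (\<Sum>k\<in>K. \<Sum>z\<in>B k. Ps b (x k) * J i z)"
      unfolding F_def sum_distrib_right by (simp add: mult.commute)
    have "eb V c (U i) (Ps b) - (\<Sum>k\<in>K. F i k * Ps b (x k))
        = (\<Sum>k\<in>K. \<Sum>z\<in>B k. Ps b z * J i z) - (\<Sum>k\<in>K. \<Sum>z\<in>B k. Ps b (x k) * J i z)"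
      unfolding E1 fe ..
    also have "\<dots> = (\<Sum>k\<in>K. \<Sum>z\<in>B k. (Ps b z - Ps b (x k)) * J i z)"
      by (simp add: sum_subtractf[symmetric] left_diff_distrib)
    finally have de: "eb V c (U i) (Ps b) - (\<Sum>k\<in>K. F i k * Ps b (x k))
        = (\<Sum>k\<in>K. \<Sum>z\<in>B k. (Ps b z - Ps b (x k)) * J i z)" .
    have "\<bar>eb V c (U i) (Ps b) - (\<Sum>k\<in>K. F i k * Ps b (x k))\<bar>
        \<le> (\<Sum>k\<in>K. \<Sum>z\<in>B k. \<bar>(Ps b z - Ps b (x k)) * J i z\<bar>)"
      unfolding de by (rule order_trans[OF sum_abs sum_mono[OF sum_abs]])
    also have "\<dots> \<le> (\<Sum>k\<in>K. \<Sum>z\<in>B k. \<epsilon> / 48 * \<bar>J i z\<bar>)"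
    proof (intro sum_mono)
      fix k z assume k: "k \<in> K" and z: "z \<in> B k"
      have "\<bar>Ps b z - Ps b (x k)\<bar> * \<bar>J i z\<bar> \<le> \<epsilon> / 48 * \<bar>J i z\<bar>"
        by (rule mult_right_mono[OF tr[OF k z]]) simp
      then show "\<bar>(Ps b z - Ps b (x k)) * J i z\<bar> \<le> \<epsilon> / 48 * \<bar>J i z\<bar>" by (simp add: abs_mult)
    qed
    also have "\<dots> = \<epsilon> / 48 * (\<Sum>k\<in>K. \<Sum>z\<in>B k. \<bar>J i z\<bar>)" by (simp add: sum_distrib_left)
    also have "\<dots> = \<epsilon> / 48 * (2 * C i)" using Abs[OF iK] by simp
    finally show ?thesis .
  qed
  define T where "T = (\<Sum>i\<in>K. \<Sum>k\<in>K. F i k * Ps i (x k))"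
  define SC where "SC = (\<Sum>i\<in>K. C i)"
  have P3: "T \<le> (real m - 1) + \<epsilon> / 24 * SC"
  proof -
    have "T \<le> (\<Sum>i\<in>K. ((if i = i then 1 else 0) - (if i = 1 then 1 else 0)) + \<epsilon> / 48 * (2 * C i))"
      unfolding T_def
    proof (rule sum_mono)
      fix i assume iK: "i \<in> K"
      show "(\<Sum>k\<in>K. F i k * Ps i (x k)) \<le> ((if i = i then 1 else 0) - (if i = 1 then 1 else 0)) + \<epsilon> / 48 * (2 * C i)"
      proof -
        have h1: "\<bar>eb V c (U i) (Ps i) - (\<Sum>k\<in>K. F i k * Ps i (x k))\<bar> \<le> \<epsilon> / 48 * (2 * C i)"
          by (rule P2[OF iK iK])
        have h2: "eb V c (U i) (Ps i) = (if i = i then 1 else 0) - (if i = 1 then 1 else 0)"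
          by (rule P1[OF iK iK])
        have "- (eb V c (U i) (Ps i) - (\<Sum>k\<in>K. F i k * Ps i (x k))) \<le> \<epsilon> / 48 * (2 * C i)"
          using abs_le_D2[OF h1] .
        then show ?thesis unfolding h2[symmetric] by linarith
      qed
    qed
    also have "\<dots> = (\<Sum>i\<in>K. 1) - (\<Sum>i\<in>K. (if i = 1 then 1 else 0)) + \<epsilon> / 24 * SC"
      unfolding SC_def by (simp add: sum.distrib sum_subtractf sum_distrib_left)
    also have "\<dots> = real m - 1 + \<epsilon> / 24 * SC" using cardK oneK finK by simp
    finally show ?thesis .
  qed
  define D where "D i k = Ps i (x i) - Ps k (x i) - Ps i (x k) + Ps k (x k)" for i k
  have Dge: "D i k \<ge> \<epsilon>" if "i \<in> K" "k \<in> K" "i \<noteq> k" for i k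
  proof -
    have L: "\<forall>z\<in>V. lap V c (\<lambda>z. Ps i z - Ps k z) z = 1 * ((if z = x i then 1 else 0) - (if z = x k then 1 else 0))"
      using Ps[OF that(1)] Ps[OF that(2)] by (simp add: lap_diff)
    have "reff V c (x i) (x k) \<le> (Ps i (x i) - Ps k (x i)) - (Ps i (x k) - Ps k (x k))"
      using reff_le[OF net xV[OF that(1)] xV[OF that(2)] xdist[OF that] L] by simp
    moreover have "reff V c (x i) (x k) \<ge> \<epsilon>"
      using Rout that xB unfolding K_def by blast
    ultimately show ?thesis unfolding D_def by simp
  qed
  have P4a: "(\<Sum>i\<in>K. \<Sum>k\<in>K. - F i k * D i k) = 2 * T"
  proof -
    have s1: "(\<Sum>i\<in>K. \<Sum>k\<in>K. F i k * Ps i (x i)) = 0"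
      using E2 by (simp add: sum_distrib_right[symmetric])
    have s2: "(\<Sum>i\<in>K. \<Sum>k\<in>K. F i k * Ps k (x k)) = 0"
    proof -
      have "(\<Sum>i\<in>K. \<Sum>k\<in>K. F i k * Ps k (x k)) = (\<Sum>k\<in>K. \<Sum>i\<in>K. F k i * Ps k (x k))"
        by (subst sum.swap) (intro sum.cong refl, simp add: Fsym)
      also have "\<dots> = 0" using E2 by (simp add: sum_distrib_right[symmetric])
      finally show ?thesis .
    qed
    have s3: "(\<Sum>i\<in>K. \<Sum>k\<in>K. F i k * Ps k (x i)) = T"
    proof -
      have "(\<Sum>i\<in>K. \<Sum>k\<in>K. F i k * Ps k (x i)) = (\<Sum>k\<in>K. \<Sum>i\<in>K. F k i * Ps k (x i))"
        by (subst sum.swap) (intro sum.cong refl, simp add: Fsym)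
      then show ?thesis unfolding T_def by simp
    qed
    have "(\<Sum>i\<in>K. \<Sum>k\<in>K. - F i k * D i k) = (\<Sum>i\<in>K. \<Sum>k\<in>K.
        F i k * Ps k (x i) + F i k * Ps i (x k) - F i k * Ps i (x i) - F i k * Ps k (x k))"
      unfolding D_def by (intro sum.cong refl) (simp add: algebra_simps)
    also have "\<dots> = (\<Sum>i\<in>K. \<Sum>k\<in>K. F i k * Ps k (x i)) + (\<Sum>i\<in>K. \<Sum>k\<in>K. F i k * Ps i (x k))
        - (\<Sum>i\<in>K. \<Sum>k\<in>K. F i k * Ps i (x i)) - (\<Sum>i\<in>K. \<Sum>k\<in>K. F i k * Ps k (x k))"
      by (simp add: sum.distrib sum_subtractf)
    also have "\<dots> = 2 * T" using s1 s2 s3 unfolding T_def by simp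
    finally show ?thesis .
  qed
  have P4b: "(\<Sum>i\<in>K. \<Sum>k\<in>K. - F i k * D i k) \<ge> \<epsilon> * SC"
  proof -
    have "(\<Sum>i\<in>K. \<Sum>k\<in>K. - F i k * D i k) \<ge> (\<Sum>i\<in>K. \<Sum>k\<in>K. \<epsilon> * (- F i k) + (if k = i then \<epsilon> * F i i else 0))"
    proof (intro sum_mono)
      fix i k assume iK: "i \<in> K" and kK: "k \<in> K"
      show "\<epsilon> * (- F i k) + (if k = i then \<epsilon> * F i i else 0) \<le> - F i k * D i k"
      proof (cases "k = i")
        case True then show ?thesis unfolding D_def by simp
      next
        case False
        have "- F i k \<ge> 0" using Fneg[OF iK kK False] by simp
        moreover have "D i k \<ge> \<epsilon>" using Dge[OF iK kK] False by simp
        ultimately have "- F i k * \<epsilon> \<le> - F i k * D i k" using mult_left_mono[of \<epsilon> "D i k" "- F i k"] by simp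
        then show ?thesis using False by (simp add: algebra_simps)
      qed
    qed
    also have "(\<Sum>i\<in>K. \<Sum>k\<in>K. \<epsilon> * (- F i k) + (if k = i then \<epsilon> * F i i else 0)) = (\<Sum>i\<in>K. \<epsilon> * C i)"
    proof (rule sum.cong[OF refl])
      fix i assume iK: "i \<in> K"
      have "(\<Sum>k\<in>K. \<epsilon> * (- F i k) + (if k = i then \<epsilon> * F i i else 0)) = - \<epsilon> * (\<Sum>k\<in>K. F i k) + \<epsilon> * F i i"
        using finK iK by (simp add: sum_subtractf sum_distrib_left sum_negf)
      also have "\<dots> = \<epsilon> * C i" using E2 E4[OF iK] by simp
      finally show "(\<Sum>k\<in>K. \<epsilon> * (- F i k) + (if k = i then \<epsilon> * F i i else 0)) = \<epsilon> * C i" .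
    qed
    also have "\<dots> = \<epsilon> * SC" unfolding SC_def by (simp add: sum_distrib_left)
    finally show ?thesis .
  qed
  have SCb: "SC \<le> 24 * (real m - 1) / (11 * \<epsilon>)"
  proof -
    have "\<epsilon> * SC \<le> 2 * (real m - 1) + \<epsilon> / 12 * SC" using P3 P4a P4b by simp
    then have "11 * \<epsilon> * SC \<le> 24 * (real m - 1)" by simp
    then show ?thesis using eps by (simp add: field_simps)
  qed
  define I where "I = {i \<in> K. C i \<le> 24 / \<epsilon>}"
  define Bd where "Bd = K - I"
  have IK: "I \<subseteq> K" unfolding I_def by auto
  have finBd: "finite Bd" unfolding Bd_def using finK by simp
  have "real (card Bd) * (24 / \<epsilon>) \<le> (\<Sum>i\<in>Bd. C i)"
  proof -
    have "(\<Sum>i\<in>Bd. 24 / \<epsilon>) \<le> (\<Sum>i\<in>Bd. C i)"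
      by (intro sum_mono) (auto simp: Bd_def I_def)
    then show ?thesis by simp
  qed
  also have "\<dots> \<le> SC" unfolding SC_def
    by (rule sum_mono2[OF finK]) (auto simp: Bd_def Cnn)
  also have "\<dots> \<le> 24 * (real m - 1) / (11 * \<epsilon>)" by (rule SCb)
  finally have "real (card Bd) * (24 / \<epsilon>) \<le> 24 * (real m - 1) / (11 * \<epsilon>)" .
  then have cBd: "real (card Bd) \<le> (real m - 1) / 11" using eps by (simp add: field_simps)
  have "card K = card I + card Bd"
    unfolding Bd_def using card_Diff_subset[OF finite_subset[OF IK finK] IK] card_mono[OF finK IK] by simp
  then have cI: "real (card I) \<ge> real m / 2" using cBd cardK by simp
  have good: "reff_set V c (B i) (S - B i) \<ge> \<epsilon> / 24" if iI: "i \<in> I" for i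
  proof -
    have iK: "i \<in> K" using iI IK by blast
    define j where "j = (if i = 1 then 2 else (1::nat))"
    have jK: "j \<in> K" using m2 unfolding j_def K_def by auto
    have ij: "i \<noteq> j" unfolding j_def by auto
    have xjS: "x j \<in> S - B i" using xB[OF jK] BS[OF jK] inB[OF iK jK xB[OF jK]] ij by auto
    have Ui: "U i (x i) = 1" using U1[of "x i" i] xB[OF iK] BS[OF iK] by auto
    have Uj: "U i (x j) = 0" using U1[of "x j" i] xjS by auto
    obtain \<phi> where Ep: "energy V c \<phi> > 0"
      and pm: "\<forall>f. f (x i) = 1 \<and> f (x j) = 0 \<longrightarrow> energy V c \<phi> \<le> energy V c f"
      using pair_pot[OF net xV[OF iK] xV[OF jK] xdist[OF iK jK ij]] by blast
    have Cpos: "C i > 0" using pm Ui Uj Ep unfolding C_def by force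
    have Cle: "C i \<le> 24 / \<epsilon>" using iI unfolding I_def by simp
    have "reff_set V c (B i) (S - B i) = 1 / C i"
      unfolding C_def
      by (rule glued_reff[OF net SV BS[OF iK]]) (use Bne iK xjS U1 U3 in \<open>auto simp: K_def\<close>)
    also have "\<dots> \<ge> 1 / (24 / \<epsilon>)" using Cpos Cle eps by (intro divide_left_mono) auto
    finally show ?thesis by simp
  qed
  show ?thesis using IK cI good unfolding K_def by blast
qed


end
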